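(* Assume (C1) and (C2). For any $u\in\mathcal{N}$, $$I(u)=\max_{t\ge0}I(tu).$$
   Context: Fix real numbers $p,q,r$ with $1<p<q$, $\frac p2$ a positive integer, and $r\ge1$, and functions $a,b,c:\mathbb{Z}\to(0,+\infty)$. Conditions: - (C1) There is $b_0>0$ with $b(n)\ge b_0$ for all $n$ and $b(n)\to+\infty$ as $|n|\to\infty$. - (C2) There is $c_0>0$ with $c(n)\le c_0$ for all $n$ and $\sum_n c(n)<+\infty$. Notation and spaces: - $\Delta u(n)=u(n+1)-u(n)$. - $E$ is the set of real sequences $u$ with $\|u\|:=\big(\sum_n[a(n)|\Delta u(n)|^p+b(n)|u(n)|^p]\big)^{1/p}<\infty$. - $\mathcal{D}=\{u\in E:\sum_n c(n)|u(n)|^q\ln|u(n)|^r<+\infty\}$, where terms with $u(n)=0$ are read as $0$. For $u,v\in\mathcal{D}$: - $I(u)=\frac1p\|u\|^p+\frac{r}{q^2}\sum_n c(n)|u(n)|^q-\frac1q\sum_n c(n)|u(n)|^q\ln|u(n)|^r$. - $\langle I'(u),v\rangle=\sum_n[a(n)|\Delta u(n)|^{p-2}\Delta u(n)\Delta v(n)+b(n)|u(n)|^{p-2}u(n)v(n)]-\sum_n c(n)|u(n)|^{q-2}u(n)v(n)\ln|u(n)|^r$. $\mathcal{N}=\{u\in\mathcal{D}:u\ne0,\ \langle I'(u),u\rangle=0\}$. *)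

theory Defs
  imports "HOL-Analysis.Analysis"
begin

text \<open>Sequences are functions int => real; sums over Z are unconditional
(absolute) sums, i.e. infsum / summable_on over UNIV.\<close>

definition fdiff :: "(int \<Rightarrow> real) \<Rightarrow> int \<Rightarrow> real" where
  "fdiff u n = u (n + 1) - u n"

definition E_term :: "real \<Rightarrow> (int \<Rightarrow> real) \<Rightarrow> (int \<Rightarrow> real) \<Rightarrow> (int \<Rightarrow> real) \<Rightarrow> int \<Rightarrow> real" where
  "E_term p a b u n = a n * \<bar>fdiff u n\<bar> powr p + b n * \<bar>u n\<bar> powr p"

definition Espace :: "real \<Rightarrow> (int \<Rightarrow> real) \<Rightarrow> (int \<Rightarrow> real) \<Rightarrow> (int \<Rightarrow> real) set" where
  "Espace p a b = {u. E_term p a b u summable_on UNIV}"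

definition Enorm_p :: "real \<Rightarrow> (int \<Rightarrow> real) \<Rightarrow> (int \<Rightarrow> real) \<Rightarrow> (int \<Rightarrow> real) \<Rightarrow> real" where
  "Enorm_p p a b u = (\<Sum>\<^sub>\<infinity>n. E_term p a b u n)"

definition log_term :: "real \<Rightarrow> real \<Rightarrow> (int \<Rightarrow> real) \<Rightarrow> (int \<Rightarrow> real) \<Rightarrow> int \<Rightarrow> real" where
  "log_term q r c u n = (if u n = 0 then 0 else c n * \<bar>u n\<bar> powr q * ln (\<bar>u n\<bar> powr r))"

definition Dspace :: "real \<Rightarrow> real \<Rightarrow> real \<Rightarrow> (int \<Rightarrow> real) \<Rightarrow> (int \<Rightarrow> real) \<Rightarrow> (int \<Rightarrow> real) \<Rightarrow> (int \<Rightarrow> real) set" where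
  "Dspace p q r a b c = {u \<in> Espace p a b. log_term q r c u summable_on UNIV}"

definition Ifun :: "real \<Rightarrow> real \<Rightarrow> real \<Rightarrow> (int \<Rightarrow> real) \<Rightarrow> (int \<Rightarrow> real) \<Rightarrow> (int \<Rightarrow> real) \<Rightarrow> (int \<Rightarrow> real) \<Rightarrow> real" where
  "Ifun p q r a b c u =
     Enorm_p p a b u / p + r / q^2 * (\<Sum>\<^sub>\<infinity>n. c n * \<bar>u n\<bar> powr q)
     - (\<Sum>\<^sub>\<infinity>n. log_term q r c u n) / q"

definition Ideriv :: "real \<Rightarrow> real \<Rightarrow> real \<Rightarrow> (int \<Rightarrow> real) \<Rightarrow> (int \<Rightarrow> real) \<Rightarrow> (int \<Rightarrow> real) \<Rightarrow> (int \<Rightarrow> real) \<Rightarrow> (int \<Rightarrow> real) \<Rightarrow> real" where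
  "Ideriv p q r a b c u v =
     (\<Sum>\<^sub>\<infinity>n. a n * \<bar>fdiff u n\<bar> powr (p - 2) * fdiff u n * fdiff v n
            + b n * \<bar>u n\<bar> powr (p - 2) * u n * v n)
     - (\<Sum>\<^sub>\<infinity>n. (if u n = 0 then 0 else
            c n * \<bar>u n\<bar> powr (q - 2) * u n * v n * ln (\<bar>u n\<bar> powr r)))"

definition Nehari :: "real \<Rightarrow> real \<Rightarrow> real \<Rightarrow> (int \<Rightarrow> real) \<Rightarrow> (int \<Rightarrow> real) \<Rightarrow> (int \<Rightarrow> real) \<Rightarrow> (int \<Rightarrow> real) set" where
  "Nehari p q r a b c = {u \<in> Dspace p q r a b c. u \<noteq> (\<lambda>_. 0) \<and> Ideriv p q r a b c u u = 0}"

end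

theory Submission
  imports Defs
begin

definition FF :: "real \<Rightarrow> real \<Rightarrow> real \<Rightarrow> real \<Rightarrow> real \<Rightarrow> real \<Rightarrow> real" where
 "FF p q r A B t = A*(t powr p/p - t powr q/q) + r*B*(t powr q/q^2 - t powr q * ln t/q)"

lemma FF_deriv:
  assumes "0 < t" "0 < p" "0 < q"
  shows "(FF p q r A B has_real_derivative
     (A*(t powr (p-1) - t powr (q-1)) - r*B*(t powr (q-1) * ln t))) (at t)"
proof -
  have eq: "FF p q r A B = (\<lambda>t. A*((1/p)*t powr p - (1/q)*t powr q) + r*B*((1/q^2)*t powr q - (1/q)*(t powr q * ln t)))"
    by (auto simp: FF_def fun_eq_iff)
  have e2: "t powr q * (1/t) = t powr (q-1)" using assms by (simp add: powr_diff)
  show ?thesis unfolding eq using assms e2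
    by (auto intro!: derivative_eq_intros simp: eval_nat_numeral field_simps)
qed

lemma FF_max:
  assumes "0 < t" "1 < p" "p < q" "A \<ge> 0" "B \<ge> 0" "r \<ge> 0"
  shows "FF p q r A B t \<le> FF p q r A B 1"
proof -
  have cont: "continuous_on {x..y} (FF p q r A B)" if "0 < x" for x y
    using assms that by (intro continuous_at_imp_continuous_on ballI DERIV_isCont[OF FF_deriv]) auto
  show ?thesis
  proof (cases "t \<le> 1")
    case True
    show ?thesis
    proof (rule DERIV_nonneg_imp_increasing_open[OF True _ cont[OF assms(1)]])
      fix x assume x: "t < x" "x < 1"
      have x0: "0 < x" using x assms by simp
      have "x powr (q-1) \<le> x powr (p-1)" using x x0 assms by (intro powr_mono') auto
      moreover have "ln x \<le> 0" using x x0 by simp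
      ultimately have "0 \<le> A*(x powr (p-1) - x powr (q-1))" "r*B*(x powr (q-1) * ln x) \<le> 0"
        using assms by (simp_all add: mult_nonneg_nonpos mult_nonneg_nonneg)
      then have "0 \<le> A*(x powr (p-1) - x powr (q-1)) - r*B*(x powr (q-1) * ln x)" by linarith
      moreover have "DERIV (FF p q r A B) x :> (A*(x powr (p-1) - x powr (q-1)) - r*B*(x powr (q-1) * ln x))"
        using FF_deriv[OF x0, of p q r A B] assms by linarith
      ultimately show "\<exists>y. DERIV (FF p q r A B) x :> y \<and> 0 \<le> y" by blast
    qed
  next
    case False
    show ?thesis
    proof (rule DERIV_nonpos_imp_decreasing_open[of 1 t, OF _ _ cont])
      fix x assume x: "1 < x" "x < t"
      have x0: "0 < x" using x assms by simp
      have "x powr (p-1) \<le> x powr (q-1)" using x x0 assms by (intro powr_mono) auto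
      moreover have "ln x \<ge> 0" using x x0 by simp
      ultimately have "A*(x powr (p-1) - x powr (q-1)) \<le> 0" "0 \<le> r*B*(x powr (q-1) * ln x)"
        using assms by (simp_all add: mult_nonneg_nonpos)
      then have "A*(x powr (p-1) - x powr (q-1)) - r*B*(x powr (q-1) * ln x) \<le> 0" by linarith
      moreover have "DERIV (FF p q r A B) x :> (A*(x powr (p-1) - x powr (q-1)) - r*B*(x powr (q-1) * ln x))"
        using FF_deriv[OF x0, of p q r A B] assms by linarith
      ultimately show "\<exists>y. DERIV (FF p q r A B) x :> y \<and> y \<le> 0" by blast
    qed (use False in auto)
  qed
qed

lemma E_scale:
  assumes "0 \<le> t"
  shows "E_term p a b (\<lambda>n. t * u n) n = t powr p * E_term p a b u n"
proof -
  have "fdiff (\<lambda>n. t * u n) n = t * fdiff u n" by (simp add: fdiff_def algebra_simps)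
  then show ?thesis using assms
    by (simp add: E_term_def abs_mult powr_mult algebra_simps)
qed

lemma log_scale:
  assumes "0 < t"
  shows "log_term q r c (\<lambda>n. t * u n) n
     = t powr q * log_term q r c u n + r * ln t * t powr q * (c n * \<bar>u n\<bar> powr q)"
proof (cases "u n = 0")
  case True then show ?thesis by (simp add: log_term_def)
next
  case False
  have e1: "\<bar>t * u n\<bar> = t * \<bar>u n\<bar>" using assms by (simp add: abs_mult)
  have e2: "ln ((t * \<bar>u n\<bar>) powr r) = r * ln t + r * ln \<bar>u n\<bar>"
    using assms False by (simp add: ln_mult algebra_simps)
  have e3: "(t * \<bar>u n\<bar>) powr q = t powr q * \<bar>u n\<bar> powr q" by (simp add: powr_mult)
  have e4: "ln (\<bar>u n\<bar> powr r) = r * ln \<bar>u n\<bar>" by simp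
  show ?thesis using assms False unfolding log_term_def
    by (simp only: e1 e2 e3 e4 mult_eq_0_iff if_False) (simp add: algebra_simps)
qed

lemma E_scale_fun:
  assumes "0 \<le> t"
  shows "E_term p a b (\<lambda>n. t * u n) = (\<lambda>n. t powr p * E_term p a b u n)"
  using E_scale[OF assms] by (rule ext)

lemma log_scale_fun:
  assumes "0 < t"
  shows "log_term q r c (\<lambda>n. t * u n)
     = (\<lambda>n. t powr q * log_term q r c u n + r * ln t * t powr q * (c n * \<bar>u n\<bar> powr q))"
  using log_scale[OF assms] by (rule ext)

lemma powr_sq_id: "\<bar>x::real\<bar> powr (p - 2) * x * x = \<bar>x\<bar> powr p"
proof (cases "x = 0")
  case False
  have "x * x = \<bar>x\<bar> powr 2" using False by (simp add: powr_numeral power2_eq_square)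
  then have "\<bar>x\<bar> powr (p - 2) * x * x = \<bar>x\<bar> powr (p - 2) * \<bar>x\<bar> powr 2" by (simp add: mult.assoc)
  also have "\<dots> = \<bar>x\<bar> powr (p - 2 + 2)" by (rule powr_add[symmetric])
  finally show ?thesis by simp
qed simp

lemma powr_sq_id2: "c * \<bar>x::real\<bar> powr (p - 2) * x * x = c * \<bar>x\<bar> powr p"
  using powr_sq_id[of x p] by (simp add: mult.assoc)

theorem corollary2p5:
  fixes p q r :: real and a b c :: "int \<Rightarrow> real" and u :: "int \<Rightarrow> real"
  assumes pq: "1 < p" "p < q"
    and p_half: "\<exists>k::nat. k > 0 \<and> p / 2 = real k"
    and r: "r \<ge> 1"
    and pos: "\<And>n. a n > 0" "\<And>n. b n > 0" "\<And>n. c n > 0"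
    and C1: "\<exists>b0>0. \<forall>n. b n \<ge> b0" "filterlim (\<lambda>n. b n) at_top (sup at_bot at_top)"
    and C2: "\<exists>c0>0. \<forall>n. c n \<le> c0" "c summable_on UNIV"
    and uN: "u \<in> Nehari p q r a b c"
  shows "(\<forall>t\<ge>0. (\<lambda>n. t * u n) \<in> Dspace p q r a b c
              \<and> Ifun p q r a b c (\<lambda>n. t * u n) \<le> Ifun p q r a b c u)
         \<and> Ifun p q r a b c u = (SUP t \<in> {0..}. Ifun p q r a b c (\<lambda>n. t * u n))"
proof -
  have sumE: "E_term p a b u summable_on UNIV"
    and sumL: "log_term q r c u summable_on UNIV"
    and Id0: "Ideriv p q r a b c u u = 0"
    using uN by (auto simp: Nehari_def Dspace_def Espace_def)
  define A where "A = Enorm_p p a b u"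
  define B where "B = (\<Sum>\<^sub>\<infinity>n. c n * \<bar>u n\<bar> powr q)"
  define L where "L = (\<Sum>\<^sub>\<infinity>n. log_term q r c u n)"
  have Enn: "\<And>n. 0 \<le> E_term p a b u n" using pos by (simp add: E_term_def less_imp_le)
  have A0: "0 \<le> A" unfolding A_def Enorm_p_def by (rule infsum_nonneg) (use Enn in auto)
  have B0: "0 \<le> B" unfolding B_def by (rule infsum_nonneg) (use pos in \<open>auto simp: less_imp_le\<close>)
  obtain b0 where b0: "b0 > 0" "\<And>n. b n \<ge> b0" using C1(1) by auto
  define M where "M = (A / b0) powr (1/p)"
  have ubound: "\<bar>u n\<bar> \<le> M" for n
  proof -
    have "E_term p a b u n = (\<Sum>\<^sub>\<infinity>m\<in>{n}. E_term p a b u m)" by simp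
    also have "\<dots> \<le> A" unfolding A_def Enorm_p_def
      by (rule infsum_mono_neutral) (use sumE Enn in auto)
    finally have "E_term p a b u n \<le> A" .
    moreover have "b0 * \<bar>u n\<bar> powr p \<le> E_term p a b u n"
      using b0(2)[of n] pos(1)[of n] unfolding E_term_def
      by (smt (verit, best) mult_right_mono powr_ge_zero zero_le_mult_iff)
    ultimately have "\<bar>u n\<bar> powr p \<le> A / b0" using b0(1) by (simp add: field_simps)
    then have "(\<bar>u n\<bar> powr p) powr (1/p) \<le> M" unfolding M_def
      by (intro powr_mono2) (use pq in auto)
    then show ?thesis using pq by (simp add: powr_powr)
  qed
  have sumB: "(\<lambda>n. c n * \<bar>u n\<bar> powr q) summable_on UNIV"
  proof (rule summable_on_comparison_test)
    show "(\<lambda>n. M powr q * c n) summable_on UNIV" by (rule summable_on_cmult_right[OF C2(2)])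
    fix n
    have "\<bar>u n\<bar> powr q \<le> M powr q" using ubound[of n] pq by (intro powr_mono2) auto
    then show "c n * \<bar>u n\<bar> powr q \<le> M powr q * c n" using pos(3)[of n]
      by (simp add: mult.commute mult_left_mono)
    show "0 \<le> c n * \<bar>u n\<bar> powr q" using pos(3)[of n] by simp
  qed
  have AL: "A = L"
  proof -
    have s1: "(\<lambda>n. a n * \<bar>fdiff u n\<bar> powr (p - 2) * fdiff u n * fdiff u n
            + b n * \<bar>u n\<bar> powr (p - 2) * u n * u n) = E_term p a b u"
      by (rule ext) (simp add: E_term_def powr_sq_id2)
    have s2: "(\<lambda>n. if u n = 0 then 0 else
            c n * \<bar>u n\<bar> powr (q - 2) * u n * u n * ln (\<bar>u n\<bar> powr r)) = log_term q r c u"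
      by (rule ext) (simp only: log_term_def powr_sq_id2)
    have "Ideriv p q r a b c u u = A - L"
      unfolding Ideriv_def A_def L_def Enorm_p_def s1 s2 ..
    then show ?thesis using Id0 by simp
  qed
  have Ifun_t: "Ifun p q r a b c (\<lambda>n. t * u n) = FF p q r A B t" if t: "t > 0" for t
  proof -
    have "Enorm_p p a b (\<lambda>n. t * u n) = t powr p * A"
      unfolding Enorm_p_def A_def using t by (simp add: E_scale_fun infsum_cmult_right')
    moreover have "(\<Sum>\<^sub>\<infinity>n. c n * \<bar>t * u n\<bar> powr q) = t powr q * B"
      unfolding B_def using t
      by (simp add: abs_mult powr_mult mult.left_commute[of "c _"] infsum_cmult_right')
    moreover have "(\<Sum>\<^sub>\<infinity>n. log_term q r c (\<lambda>n. t * u n) n) = t powr q * L + r * ln t * t powr q * B"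
      unfolding L_def B_def using t
      by (simp add: log_scale_fun infsum_add summable_on_cmult_right sumL sumB infsum_cmult_right')
    ultimately show ?thesis unfolding Ifun_def FF_def using AL pq
      by (simp add: field_simps)
  qed
  have Ifun_u: "Ifun p q r a b c u = FF p q r A B 1"
    using Ifun_t[of 1] by simp
  have FF1: "0 \<le> FF p q r A B 1"
  proof -
    have "FF p q r A B 1 = A*(1/p - 1/q) + r*B/q^2" by (simp add: FF_def)
    moreover have "1/q \<le> 1/p" using pq by (intro divide_left_mono) auto
    ultimately show ?thesis using A0 B0 r by simp
  qed
  have Ifun_0: "Ifun p q r a b c (\<lambda>n. 0 * u n) = 0"
    unfolding Ifun_def Enorm_p_def E_term_def log_term_def fdiff_def using pq by simp
  have main: "(\<lambda>n. t * u n) \<in> Dspace p q r a b c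
              \<and> Ifun p q r a b c (\<lambda>n. t * u n) \<le> Ifun p q r a b c u" if t: "t \<ge> 0" for t
  proof
    have "E_term p a b (\<lambda>n. t * u n) summable_on UNIV"
      using t by (simp add: E_scale_fun summable_on_cmult_right sumE)
    moreover have "log_term q r c (\<lambda>n. t * u n) summable_on UNIV"
    proof (cases "t = 0")
      case True
      have "log_term q r c (\<lambda>n. t * u n) = (\<lambda>n. 0)" using True by (simp add: log_term_def fun_eq_iff)
      then show ?thesis by simp
    next
      case False
      then show ?thesis using t
        by (simp add: log_scale_fun summable_on_add summable_on_cmult_right sumL sumB)
    qed
    ultimately show "(\<lambda>n. t * u n) \<in> Dspace p q r a b c" by (simp add: Dspace_def Espace_def)
    show "Ifun p q r a b c (\<lambda>n. t * u n) \<le> Ifun p q r a b c u"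
    proof (cases "t = 0")
      case True then show ?thesis using Ifun_0 Ifun_u FF1 by simp
    next
      case False
      then have "t > 0" using t by simp
      then show ?thesis using Ifun_t Ifun_u FF_max[of t p q A B r] pq A0 B0 r by simp
    qed
  qed
  have "Ifun p q r a b c u = (SUP t \<in> {0..}. Ifun p q r a b c (\<lambda>n. t * u n))"
    unfolding image_def
  proof (rule cSup_eq_maximum[symmetric])
    show "Ifun p q r a b c u \<in> {y. \<exists>x\<in>{0::real..}. y = Ifun p q r a b c (\<lambda>n. x * u n)}"
      by (rule CollectI, rule bexI[of _ 1]) auto
  qed (use main in auto)
  with main show ?thesis by blast
qed

end
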